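(* Let $n\ge 1$ and let $L_1,L_2,\underline{b}$ be positive constants. Assume that $(k_p,k_d)\in(0,\infty)\times(0,\infty)$ satisfies $k_p^2>\bar k$ and $k_d^2>k_p/\underline{b}+\bar k$, where $\bar k=(L_1+L_2)(k_p+k_d)/\underline{b}$. Then the $2n\times 2n$ matrix $$P=\begin{bmatrix} 2k_pk_d\underline{b}I_n & k_pI_n\\ k_pI_n & k_dI_n\end{bmatrix}$$ is positive definite. Moreover, for $$A=\begin{bmatrix}0_n & I_n\\ a-k_p\theta & b-k_d\theta\end{bmatrix},$$ where $a,b,\theta$ are $n\times n$ constant matrices satisfying $\|a\|\le L_1$, $\|b\|\le L_2$ and $(\theta+\theta^{\mathsf{T}})/2\ge \underline{b}I_n>0$, there exists $\beta>0$ depending only on $(k_p,k_d,L_1,L_2,\underline{b})$ such that $PA+A^{\mathsf{T}}P\le -\beta I_{2n}$ for all such $a,b,\theta$.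
   Context: Here $I_n$ and $0_n$ are the $n\times n$ identity and zero matrices, $\|\cdot\|$ is the induced Euclidean (operator) norm of a matrix, and for symmetric matrices $S_1\ge S_2$ (resp. $S_1>S_2$) means $S_1-S_2$ is positive semi-definite (resp. positive definite). *)

theory Defs
  imports "Jordan_Normal_Form.Matrix"
begin

definition vnorm :: "real vec \<Rightarrow> real" where
  "vnorm v = sqrt (v \<bullet> v)"

definition op_norm :: "real mat \<Rightarrow> real" where
  "op_norm A = Sup {vnorm (A *\<^sub>v x) | x. x \<in> carrier_vec (dim_col A) \<and> vnorm x \<le> 1}"

definition loewner_le :: "nat \<Rightarrow> real mat \<Rightarrow> real mat \<Rightarrow> bool" where
  "loewner_le n S1 S2 \<longleftrightarrow> S1 \<in> carrier_mat n n \<and> S2 \<in> carrier_mat n n \<and>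
     (\<forall>x \<in> carrier_vec n. x \<bullet> ((S2 - S1) *\<^sub>v x) \<ge> 0)"

definition loewner_less :: "nat \<Rightarrow> real mat \<Rightarrow> real mat \<Rightarrow> bool" where
  "loewner_less n S1 S2 \<longleftrightarrow> S1 \<in> carrier_mat n n \<and> S2 \<in> carrier_mat n n \<and>
     (\<forall>x \<in> carrier_vec n. x \<noteq> 0\<^sub>v n \<longrightarrow> x \<bullet> ((S2 - S1) *\<^sub>v x) > 0)"

definition pos_definite :: "nat \<Rightarrow> real mat \<Rightarrow> bool" where
  "pos_definite n P \<longleftrightarrow> P\<^sup>T = P \<and> loewner_less n (0\<^sub>m n n) P"

end

theory Submission
  imports Defs
begin


lemma smult_mat_vec: "A \<in> carrier_mat nr nc \<Longrightarrow> v \<in> carrier_vec nc \<Longrightarrow> (k \<cdot>\<^sub>m A) *\<^sub>v v = k \<cdot>\<^sub>v (A *\<^sub>v (v::real vec))"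
  by (intro eq_vecI) (auto simp: scalar_prod_def sum_distrib_left mult.assoc)

lemma amgm_vec:
  fixes x y :: "real vec"
  assumes "x \<in> carrier_vec n" "y \<in> carrier_vec n"
  shows "2 * t * (x \<bullet> y) \<le> t^2 * (x \<bullet> x) + y \<bullet> y"
proof -
  have "0 \<le> (\<Sum>i\<in>{0..<n}. (t * x$i - y$i)^2)" by (rule sum_nonneg) simp
  also have "\<dots> = (\<Sum>i\<in>{0..<n}. t^2 * (x$i * x$i) + y$i*y$i - 2*t*(x$i*y$i))"
    by (rule sum.cong) (auto simp: power2_eq_square algebra_simps)
  also have "\<dots> = t^2 * (x \<bullet> x) + y \<bullet> y - 2 * t * (x \<bullet> y)"
    using assms by (simp add: scalar_prod_def sum.distrib sum_subtractf sum_distrib_left)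
  finally show ?thesis by simp
qed

lemma self_sp_nonneg: "0 \<le> (x::real vec) \<bullet> x"
  unfolding scalar_prod_def by (rule sum_nonneg) simp

lemma cs2:
  fixes x y :: "real vec"
  assumes "x \<in> carrier_vec n" "y \<in> carrier_vec n"
  shows "(x \<bullet> y)^2 \<le> (x \<bullet> x) * (y \<bullet> y)"
proof (cases "x \<bullet> x = 0")
  case True
  have A: "\<forall>t. 2 * t * (x \<bullet> y) \<le> y \<bullet> y" using amgm_vec[OF assms] True by simp
  have "x \<bullet> y = 0"
  proof (rule ccontr)
    assume ne: "x \<bullet> y \<noteq> 0"
    have "2 * ((y \<bullet> y + 1) / (x \<bullet> y)) * (x \<bullet> y) \<le> y \<bullet> y" using A by blast
    then show False using ne self_sp_nonneg[of y] by simp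
  qed
  then show ?thesis using True by simp
next
  case False
  then have p: "x \<bullet> x > 0" using self_sp_nonneg[of x] by simp
  define t where "t = (x \<bullet> y) / (x \<bullet> x)"
  have "2 * t * (x \<bullet> y) \<le> t^2 * (x \<bullet> x) + y \<bullet> y" by (rule amgm_vec[OF assms])
  then have "2 * (x \<bullet> y)^2 / (x \<bullet> x) \<le> (x \<bullet> y)^2 / (x \<bullet> x) + y \<bullet> y"
    using p by (simp add: t_def power2_eq_square field_simps)
  then have "(x \<bullet> y)^2 / (x \<bullet> x) \<le> y \<bullet> y" by simp
  then show ?thesis using p by (simp add: field_simps mult.commute)
qed

lemma vnorm_nonneg: "0 \<le> vnorm x" unfolding vnorm_def using self_sp_nonneg by simp

lemma vnorm_sq: "vnorm x ^ 2 = x \<bullet> x" unfolding vnorm_def using self_sp_nonneg by simp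

lemma cs:
  fixes x y :: "real vec"
  assumes "x \<in> carrier_vec n" "y \<in> carrier_vec n"
  shows "x \<bullet> y \<le> vnorm x * vnorm y"
proof -
  have "x \<bullet> y \<le> \<bar>x \<bullet> y\<bar>" by simp
  also have "\<dots> = sqrt ((x \<bullet> y)^2)" by simp
  also have "\<dots> \<le> sqrt ((x \<bullet> x) * (y \<bullet> y))" using cs2[OF assms] by (simp del: real_sqrt_abs)
  also have "\<dots> = vnorm x * vnorm y" by (simp add: vnorm_def real_sqrt_mult)
  finally show ?thesis .
qed

lemma vnorm_smult: "vnorm (c \<cdot>\<^sub>v v) = \<bar>c\<bar> * vnorm (v::real vec)"
proof -
  have "(c \<cdot>\<^sub>v v) \<bullet> (c \<cdot>\<^sub>v v) = c^2 * (v \<bullet> v)" by (simp add: power2_eq_square)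
  then show ?thesis by (simp add: vnorm_def real_sqrt_mult)
qed

lemma vnorm_zero: assumes "x \<in> carrier_vec n" "vnorm x = 0" shows "x = 0\<^sub>v n"
proof -
  have "x \<bullet> x = 0" using assms vnorm_sq[of x] by simp
  then have "(\<Sum>i\<in>{0..<n}. x$i * x$i) = 0" using assms by (simp add: scalar_prod_def)
  then have "\<forall>i\<in>{0..<n}. x$i * x$i = 0" by (subst sum_nonneg_eq_0_iff[symmetric]) auto
  then show ?thesis using assms by (intro eq_vecI) auto
qed

lemma op_norm_bound:
  fixes a :: "real mat"
  assumes a: "a \<in> carrier_mat n n" and x: "x \<in> carrier_vec n"
  shows "vnorm (a *\<^sub>v x) \<le> op_norm a * vnorm x"
proof -
  define S where "S = {vnorm (a *\<^sub>v x) | x. x \<in> carrier_vec (dim_col a) \<and> vnorm x \<le> 1}"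
  define R where "R = (\<Sum>i\<in>{0..<n}. row a i \<bullet> row a i)"
  have bdd: "bdd_above S"
  proof (rule bdd_aboveI)
    fix s assume "s \<in> S"
    then obtain w where w: "w \<in> carrier_vec n" "vnorm w \<le> 1" and s: "s = vnorm (a *\<^sub>v w)"
      using a unfolding S_def by auto
    have ww: "w \<bullet> w \<le> 1" using w vnorm_sq[of w] vnorm_nonneg[of w]
      by (metis power_le_one)
    have "(a *\<^sub>v w) \<bullet> (a *\<^sub>v w) = (\<Sum>i\<in>{0..<n}. (row a i \<bullet> w)^2)"
      using a w by (simp add: scalar_prod_def[of "a *\<^sub>v w"] power2_eq_square)
    also have "\<dots> \<le> (\<Sum>i\<in>{0..<n}. (row a i \<bullet> row a i) * (w \<bullet> w))"
      by (rule sum_mono, rule cs2[of _ n], use a w in auto)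
    also have "\<dots> \<le> R" unfolding R_def
      by (rule sum_mono) (use ww self_sp_nonneg in \<open>auto intro: mult_left_le\<close>)
    finally show "s \<le> sqrt R" unfolding s vnorm_def by simp
  qed
  show ?thesis
  proof (cases "vnorm x = 0")
    case True
    have "a *\<^sub>v x = 0\<^sub>v n" using vnorm_zero[OF x True] a by (intro eq_vecI) (auto simp: scalar_prod_def)
    then show ?thesis using True by (simp add: vnorm_def[of "0\<^sub>v n"] scalar_prod_def)
  next
    case False
    then have p: "vnorm x > 0" using vnorm_nonneg[of x] by simp
    define w where "w = (1 / vnorm x) \<cdot>\<^sub>v x"
    have w: "w \<in> carrier_vec n" "vnorm w = 1" using p x by (auto simp: w_def vnorm_smult)
    have "vnorm (a *\<^sub>v w) \<in> S" unfolding S_def using w a by auto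
    then have "vnorm (a *\<^sub>v w) \<le> op_norm a" using bdd unfolding op_norm_def S_def
      by (simp add: cSup_upper)
    moreover have "a *\<^sub>v w = (1 / vnorm x) \<cdot>\<^sub>v (a *\<^sub>v x)" unfolding w_def using a x by (simp add: mult_mat_vec)
    ultimately have "vnorm (a *\<^sub>v x) / vnorm x \<le> op_norm a" using p by (simp add: vnorm_smult)
    then show ?thesis using p by (simp add: field_simps)
  qed
qed



lemma P_mult:
  fixes x y :: "real vec"
  assumes "x \<in> carrier_vec n" "y \<in> carrier_vec n"
  shows "four_block_mat (c \<cdot>\<^sub>m 1\<^sub>m n) (p \<cdot>\<^sub>m 1\<^sub>m n) (p \<cdot>\<^sub>m 1\<^sub>m n) (d \<cdot>\<^sub>m 1\<^sub>m n) *\<^sub>v (x @\<^sub>v y)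
     = (c \<cdot>\<^sub>v x + p \<cdot>\<^sub>v y) @\<^sub>v (p \<cdot>\<^sub>v x + d \<cdot>\<^sub>v y)"
  using assms by (subst four_block_mat_mult_vec[of _ n n _ n _ n]) (auto simp: smult_mat_vec)

lemma P_transpose:
  "transpose_mat (four_block_mat (c \<cdot>\<^sub>m 1\<^sub>m n) (p \<cdot>\<^sub>m 1\<^sub>m n) (p \<cdot>\<^sub>m 1\<^sub>m n) (d \<cdot>\<^sub>m 1\<^sub>m n))
    = four_block_mat (c \<cdot>\<^sub>m 1\<^sub>m n) (p \<cdot>\<^sub>m 1\<^sub>m n) (p \<cdot>\<^sub>m 1\<^sub>m n) (d \<cdot>\<^sub>m (1\<^sub>m n :: real mat))"
  by (subst transpose_four_block_mat[of _ n n _ n _ n]) auto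

lemma A_mult:
  fixes x y :: "real vec"
  assumes x: "x \<in> carrier_vec n" and y: "y \<in> carrier_vec n"
    and a: "a \<in> carrier_mat n n" and b: "b \<in> carrier_mat n n" and t: "\<theta> \<in> carrier_mat n n"
  shows "four_block_mat (0\<^sub>m n n) (1\<^sub>m n) (a - kp \<cdot>\<^sub>m \<theta>) (b - kd \<cdot>\<^sub>m \<theta>) *\<^sub>v (x @\<^sub>v y)
     = y @\<^sub>v (a *\<^sub>v x + b *\<^sub>v y - \<theta> *\<^sub>v (kp \<cdot>\<^sub>v x + kd \<cdot>\<^sub>v y))"
proof -
  have e1: "0\<^sub>m n n *\<^sub>v x + 1\<^sub>m n *\<^sub>v y = y" using x y by (intro eq_vecI) (auto simp: scalar_prod_def)
  have e2: "\<theta> *\<^sub>v (kp \<cdot>\<^sub>v x + kd \<cdot>\<^sub>v y) = kp \<cdot>\<^sub>v (\<theta> *\<^sub>v x) + kd \<cdot>\<^sub>v (\<theta> *\<^sub>v y)"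
    using x y t by (simp add: mult_add_distrib_mat_vec[of _ n n] mult_mat_vec)
  have e3: "(a - kp \<cdot>\<^sub>m \<theta>) *\<^sub>v x + (b - kd \<cdot>\<^sub>m \<theta>) *\<^sub>v y
      = a *\<^sub>v x + b *\<^sub>v y - \<theta> *\<^sub>v (kp \<cdot>\<^sub>v x + kd \<cdot>\<^sub>v y)"
    unfolding e2 using x y a b t
    by (simp add: minus_mult_distrib_mat_vec[of _ n n] smult_mat_vec) (intro eq_vecI, auto)
  show ?thesis using x y a b t
    by (subst four_block_mat_mult_vec[of _ n n _ n _ n]) (auto simp: e1 e3)
qed

lemma sym_form:
  fixes P :: "real mat"
  assumes "P \<in> carrier_mat m m" "transpose_mat P = P" "z \<in> carrier_vec m" "w \<in> carrier_vec m"
  shows "z \<bullet> (P *\<^sub>v w) = (P *\<^sub>v z) \<bullet> w"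
  using transpose_vec_mult_scalar[OF assms(1) assms(4) assms(3)] assms(2) by simp



lemma theta_lower:
  fixes u :: "real vec"
  assumes t: "\<theta> \<in> carrier_mat n n" and u: "u \<in> carrier_vec n"
    and L: "loewner_le n (bl \<cdot>\<^sub>m 1\<^sub>m n) ((1 / 2) \<cdot>\<^sub>m (\<theta> + \<theta>\<^sup>T))"
  shows "bl * (u \<bullet> u) \<le> u \<bullet> (\<theta> *\<^sub>v u)"
proof -
  have "0 \<le> u \<bullet> (((1 / 2) \<cdot>\<^sub>m (\<theta> + \<theta>\<^sup>T) - bl \<cdot>\<^sub>m 1\<^sub>m n) *\<^sub>v u)"
    using L u unfolding loewner_le_def by blast
  also have "((1 / 2) \<cdot>\<^sub>m (\<theta> + \<theta>\<^sup>T) - bl \<cdot>\<^sub>m 1\<^sub>m n) *\<^sub>v u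
     = (1/2) \<cdot>\<^sub>v (\<theta> *\<^sub>v u) + (1/2) \<cdot>\<^sub>v (\<theta>\<^sup>T *\<^sub>v u) - bl \<cdot>\<^sub>v u"
    using t u by (simp add: minus_mult_distrib_mat_vec[of _ n n] smult_mat_vec[of "\<theta> + \<theta>\<^sup>T" n n]
       smult_mat_vec[of "1\<^sub>m n" n n] add_mult_distrib_mat_vec[of _ n n] smult_add_distrib_vec[of _ n])
  also have "u \<bullet> \<dots> = (1/2) * (u \<bullet> (\<theta> *\<^sub>v u)) + (1/2) * (u \<bullet> (\<theta>\<^sup>T *\<^sub>v u)) - bl * (u \<bullet> u)"
    using t u by (simp add: scalar_prod_minus_distrib[of _ n] scalar_prod_add_distrib[of _ n])
  also have "u \<bullet> (\<theta>\<^sup>T *\<^sub>v u) = u \<bullet> (\<theta> *\<^sub>v u)"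
    using transpose_vec_mult_scalar[OF t u u] comm_scalar_prod[of u n "\<theta>\<^sup>T *\<^sub>v u"] t u by simp
  finally show ?thesis by simp
qed

lemma part2:
  fixes L1 L2 bl kp kd c :: real and a b \<theta> :: "real mat" and z :: "real vec"
  assumes pos: "L1 > 0" "L2 > 0" "bl > 0" "kp > 0" "kd > 0"
    and cdef: "c = min (bl*kp^2 - kp*L1 - (kp*L2+kd*L1)/2) (bl*kd^2 - kp - kd*L2 - (kp*L2+kd*L1)/2)"
    and a: "a \<in> carrier_mat n n" and b: "b \<in> carrier_mat n n" and t: "\<theta> \<in> carrier_mat n n"
    and na: "op_norm a \<le> L1" and nb: "op_norm b \<le> L2"
    and L: "loewner_le n (bl \<cdot>\<^sub>m 1\<^sub>m n) ((1 / 2) \<cdot>\<^sub>m (\<theta> + \<theta>\<^sup>T))"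
    and x: "x \<in> carrier_vec n" and y: "y \<in> carrier_vec n"
  shows "(2 * kp * kd * bl \<cdot>\<^sub>v x + kp \<cdot>\<^sub>v y) \<bullet> y
      + (kp \<cdot>\<^sub>v x + kd \<cdot>\<^sub>v y) \<bullet> (a *\<^sub>v x + b *\<^sub>v y - \<theta> *\<^sub>v (kp \<cdot>\<^sub>v x + kd \<cdot>\<^sub>v y))
      \<le> - c * (x \<bullet> x + y \<bullet> y)"
proof -
  define u where "u = kp \<cdot>\<^sub>v x + kd \<cdot>\<^sub>v y"
  have u: "u \<in> carrier_vec n" using x y by (simp add: u_def)
  define X where "X = vnorm x"
  define Y where "Y = vnorm y"
  define U where "U = vnorm u"
  have X0: "X \<ge> 0" "Y \<ge> 0" "U \<ge> 0" unfolding X_def Y_def U_def by (auto intro: vnorm_nonneg)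
  have xx: "x \<bullet> x = X^2" and yy: "y \<bullet> y = Y^2" unfolding X_def Y_def by (auto simp: vnorm_sq)
  have yx: "y \<bullet> x = x \<bullet> y" using comm_scalar_prod[OF x y] by simp
  have xyle: "x \<bullet> y \<le> X * Y" unfolding X_def Y_def by (rule cs[OF x y])
  have uu: "u \<bullet> u = kp^2 * (x \<bullet> x) + 2 * kp * kd * (x \<bullet> y) + kd^2 * (y \<bullet> y)"
    using x y yx unfolding u_def
    by (simp add: scalar_prod_add_distrib[of _ n] add_scalar_prod_distrib[of _ n] power2_eq_square algebra_simps)
  have "U^2 \<le> (kp * X + kd * Y)^2"
  proof -
    have "U^2 = u \<bullet> u" unfolding U_def by (simp add: vnorm_sq)
    also have "\<dots> \<le> kp^2 * X^2 + 2 * kp * kd * (X * Y) + kd^2 * Y^2"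
    proof -
      have "2*kp*kd*(x \<bullet> y) \<le> 2*kp*kd*(X*Y)" using xyle pos by (intro mult_left_mono) auto
      then show ?thesis unfolding uu xx yy by linarith
    qed
    also have "\<dots> = (kp * X + kd * Y)^2" by (simp add: power2_eq_square algebra_simps)
    finally show ?thesis .
  qed
  then have UX: "U \<le> kp * X + kd * Y"
    by (rule power2_le_imp_le) (use X0 pos in \<open>intro add_nonneg_nonneg mult_nonneg_nonneg; simp\<close>)
  have Ta: "u \<bullet> (a *\<^sub>v x) \<le> U * (L1 * X)"
  proof -
    have "u \<bullet> (a *\<^sub>v x) \<le> U * vnorm (a *\<^sub>v x)" unfolding U_def using u a x by (intro cs[of _ n]) auto
    also have "\<dots> \<le> U * (L1 * X)"
    proof (rule mult_left_mono[OF _ X0(3)])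
      have "vnorm (a *\<^sub>v x) \<le> op_norm a * X" unfolding X_def by (rule op_norm_bound[OF a x])
      also have "\<dots> \<le> L1 * X" using na X0 by (intro mult_right_mono) auto
      finally show "vnorm (a *\<^sub>v x) \<le> L1 * X" .
    qed
    finally show ?thesis .
  qed
  have Tb: "u \<bullet> (b *\<^sub>v y) \<le> U * (L2 * Y)"
  proof -
    have "u \<bullet> (b *\<^sub>v y) \<le> U * vnorm (b *\<^sub>v y)" unfolding U_def using u b y by (intro cs[of _ n]) auto
    also have "\<dots> \<le> U * (L2 * Y)"
    proof (rule mult_left_mono[OF _ X0(3)])
      have "vnorm (b *\<^sub>v y) \<le> op_norm b * Y" unfolding Y_def by (rule op_norm_bound[OF b y])
      also have "\<dots> \<le> L2 * Y" using nb X0 by (intro mult_right_mono) auto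
      finally show "vnorm (b *\<^sub>v y) \<le> L2 * Y" .
    qed
    finally show ?thesis .
  qed
  have Tt: "bl * (u \<bullet> u) \<le> u \<bullet> (\<theta> *\<^sub>v u)" by (rule theta_lower[OF t u L])
  have lhs: "(2 * kp * kd * bl \<cdot>\<^sub>v x + kp \<cdot>\<^sub>v y) \<bullet> y
      + (kp \<cdot>\<^sub>v x + kd \<cdot>\<^sub>v y) \<bullet> (a *\<^sub>v x + b *\<^sub>v y - \<theta> *\<^sub>v (kp \<cdot>\<^sub>v x + kd \<cdot>\<^sub>v y))
      = 2 * kp * kd * bl * (x \<bullet> y) + kp * (y \<bullet> y) + u \<bullet> (a *\<^sub>v x) + u \<bullet> (b *\<^sub>v y) - u \<bullet> (\<theta> *\<^sub>v u)"
    unfolding u_def[symmetric] using x y u a b t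
    by (simp add: scalar_prod_add_distrib[of _ n] add_scalar_prod_distrib[of _ n] scalar_prod_minus_distrib[of _ n])
  have "U * (L1 * X) + U * (L2 * Y) = U * (L1 * X + L2 * Y)" by (simp only: distrib_left)
  also have "\<dots> \<le> (kp * X + kd * Y) * (L1 * X + L2 * Y)"
    using X0 pos by (intro mult_right_mono[OF UX]) auto
  also have "\<dots> = kp*L1*X^2 + kd*L2*Y^2 + (kp*L2+kd*L1) * (X*Y)" by (simp add: power2_eq_square algebra_simps)
  also have "\<dots> \<le> kp*L1*X^2 + kd*L2*Y^2 + (kp*L2+kd*L1) * ((X^2+Y^2)/2)"
  proof -
    have "X*Y \<le> (X^2+Y^2)/2" using sum_squares_bound[of X Y] by (simp add: power2_eq_square)
    then show ?thesis using pos by (intro add_left_mono mult_left_mono) auto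
  qed
  finally have B: "U * (L1 * X) + U * (L2 * Y) \<le> kp*L1*X^2 + kd*L2*Y^2 + (kp*L2+kd*L1) * ((X^2+Y^2)/2)" .
  have c1: "c \<le> bl*kp^2 - kp*L1 - (kp*L2+kd*L1)/2" and c2: "c \<le> bl*kd^2 - kp - kd*L2 - (kp*L2+kd*L1)/2"
    unfolding cdef by auto
  have m1: "c * X^2 \<le> (bl*kp^2 - kp*L1 - (kp*L2+kd*L1)/2) * X^2" by (rule mult_right_mono[OF c1]) simp
  have m2: "c * Y^2 \<le> (bl*kd^2 - kp - kd*L2 - (kp*L2+kd*L1)/2) * Y^2" by (rule mult_right_mono[OF c2]) simp
  have C: "c * (X^2 + Y^2) \<le> bl*kp^2*X^2 - kp*L1*X^2 - (kp*L2+kd*L1)*((X^2+Y^2)/2) + bl*kd^2*Y^2 - kp*Y^2 - kd*L2*Y^2"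
  proof -
    have e1: "(bl*kp^2 - kp*L1 - (kp*L2+kd*L1)/2) * X^2 = bl*kp^2*X^2 - kp*L1*X^2 - (kp*L2+kd*L1)*X^2/2"
      by (simp add: field_simps)
    have e2: "(bl*kd^2 - kp - kd*L2 - (kp*L2+kd*L1)/2) * Y^2 = bl*kd^2*Y^2 - kp*Y^2 - kd*L2*Y^2 - (kp*L2+kd*L1)*Y^2/2"
      by (simp add: field_simps)
    have e3: "(kp*L2+kd*L1)*((X^2+Y^2)/2) = (kp*L2+kd*L1)*X^2/2 + (kp*L2+kd*L1)*Y^2/2"
      by (simp add: field_simps)
    have e4: "c * (X^2 + Y^2) = c * X^2 + c * Y^2" by (simp add: distrib_left)
    show ?thesis using m1 m2 unfolding e1 e2 e3 e4 by linarith
  qed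
  have D: "bl * (u \<bullet> u) = bl*kp^2*X^2 + 2*kp*kd*bl*(x \<bullet> y) + bl*kd^2*Y^2"
    unfolding uu xx yy by (simp add: algebra_simps)
  have E: "- c * (x \<bullet> x + y \<bullet> y) = - (c * (X^2 + Y^2))" unfolding xx yy by simp
  show ?thesis unfolding lhs xx yy using Ta Tb Tt B C D by linarith
qed

lemma aux_lin: "(q::real) \<le> - c * s \<Longrightarrow> 0 \<le> - (2 * c) * s - 2 * q"
  by (simp add: algebra_simps)

lemma part1:
  fixes x y :: "real vec"
  assumes pos: "bl > 0" "kp > 0" "kd > 0" and h: "kp < 2 * kd^2 * bl"
    and x: "x \<in> carrier_vec n" and y: "y \<in> carrier_vec n" and nz: "x \<bullet> x + y \<bullet> y > 0"
  shows "x \<bullet> (2 * kp * kd * bl \<cdot>\<^sub>v x + kp \<cdot>\<^sub>v y) + y \<bullet> (kp \<cdot>\<^sub>v x + kd \<cdot>\<^sub>v y) > 0"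
proof -
  have yx: "y \<bullet> x = x \<bullet> y" using comm_scalar_prod[OF x y] by simp
  have F: "x \<bullet> (2 * kp * kd * bl \<cdot>\<^sub>v x + kp \<cdot>\<^sub>v y) + y \<bullet> (kp \<cdot>\<^sub>v x + kd \<cdot>\<^sub>v y)
     = 2 * kp * kd * bl * (x \<bullet> x) + 2 * kp * (x \<bullet> y) + kd * (y \<bullet> y)"
    using x y yx by (simp add: scalar_prod_add_distrib[of _ n] algebra_simps)
  have xx0: "x \<bullet> x \<ge> 0" "y \<bullet> y \<ge> 0" by (auto intro: self_sp_nonneg)
  show ?thesis unfolding F
  proof (cases "x \<bullet> x = 0")
    case True
    have "(x \<bullet> y)^2 \<le> 0" using cs2[OF x y] True by simp
    then have "x \<bullet> y = 0" by simp
    then show "2 * kp * kd * bl * (x \<bullet> x) + 2 * kp * (x \<bullet> y) + kd * (y \<bullet> y) > 0"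
      using True nz pos by simp
  next
    case False
    then have xp: "x \<bullet> x > 0" using xx0 by simp
    have am: "2 * (- kp / kd) * (x \<bullet> y) \<le> (- kp / kd)^2 * (x \<bullet> x) + y \<bullet> y" by (rule amgm_vec[OF x y])
    have "kd^2 * (2 * (- kp / kd) * (x \<bullet> y)) \<le> kd^2 * ((- kp / kd)^2 * (x \<bullet> x) + y \<bullet> y)"
      using am pos by (intro mult_left_mono) auto
    moreover have "kd^2 * (2 * (- kp / kd) * (x \<bullet> y)) = - 2 * kp * kd * (x \<bullet> y)"
      using pos by (simp add: power2_eq_square field_simps)
    moreover have "kd^2 * ((- kp / kd)^2 * (x \<bullet> x) + y \<bullet> y) = kp^2 * (x \<bullet> x) + kd^2 * (y \<bullet> y)"
      using pos by (simp add: power2_eq_square field_simps)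
    ultimately have am2: "- 2 * kp * kd * (x \<bullet> y) \<le> kp^2 * (x \<bullet> x) + kd^2 * (y \<bullet> y)"
      by simp
    have g: "(2 * kd^2 * bl - kp) * kp * (x \<bullet> x) > 0" using h pos xp by simp
    have "kd * (2 * kp * kd * bl * (x \<bullet> x) + 2 * kp * (x \<bullet> y) + kd * (y \<bullet> y))
        = 2 * kd^2 * bl * kp * (x \<bullet> x) + 2 * kp * kd * (x \<bullet> y) + kd^2 * (y \<bullet> y)"
      by (simp add: algebra_simps power2_eq_square)
    also have "\<dots> \<ge> (2 * kd^2 * bl - kp) * kp * (x \<bullet> x)"
    proof -
      have "(2 * kd^2 * bl - kp) * kp * (x \<bullet> x) = 2 * kd^2 * bl * kp * (x \<bullet> x) - kp^2 * (x \<bullet> x)"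
        by (simp add: algebra_simps power2_eq_square)
      then show ?thesis using am2 by linarith
    qed
    finally have "kd * (2 * kp * kd * bl * (x \<bullet> x) + 2 * kp * (x \<bullet> y) + kd * (y \<bullet> y)) > 0"
      using g by linarith
    then show "2 * kp * kd * bl * (x \<bullet> x) + 2 * kp * (x \<bullet> y) + kd * (y \<bullet> y) > 0"
      using pos by (simp add: zero_less_mult_iff)
  qed
qed

theorem proposition4p3:
  fixes L1 L2 bl kp kd :: real
  assumes "L1 > 0" and "L2 > 0" and "bl > 0" and "kp > 0" and "kd > 0"
    and "kp ^ 2 > (L1 + L2) * (kp + kd) / bl"
    and "kd ^ 2 > kp / bl + (L1 + L2) * (kp + kd) / bl"
  shows "(\<forall>n::nat. n \<ge> 1 \<longrightarrow>
           pos_definite (2 * n)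
             (four_block_mat ((2 * kp * kd * bl) \<cdot>\<^sub>m 1\<^sub>m n) (kp \<cdot>\<^sub>m 1\<^sub>m n)
                             (kp \<cdot>\<^sub>m 1\<^sub>m n) (kd \<cdot>\<^sub>m 1\<^sub>m n)))
       \<and> (\<exists>\<beta>::real. \<beta> > 0 \<and>
           (\<forall>n::nat. \<forall>a b \<theta> :: real mat. n \<ge> 1 \<longrightarrow>
              a \<in> carrier_mat n n \<longrightarrow> b \<in> carrier_mat n n \<longrightarrow> \<theta> \<in> carrier_mat n n \<longrightarrow>
              op_norm a \<le> L1 \<longrightarrow> op_norm b \<le> L2 \<longrightarrow>
              loewner_le n (bl \<cdot>\<^sub>m 1\<^sub>m n) ((1 / 2) \<cdot>\<^sub>m (\<theta> + \<theta>\<^sup>T)) \<longrightarrow>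
              (let P = four_block_mat ((2 * kp * kd * bl) \<cdot>\<^sub>m 1\<^sub>m n) (kp \<cdot>\<^sub>m 1\<^sub>m n)
                                      (kp \<cdot>\<^sub>m 1\<^sub>m n) (kd \<cdot>\<^sub>m 1\<^sub>m n);
                   A = four_block_mat (0\<^sub>m n n) (1\<^sub>m n)
                                      (a - kp \<cdot>\<^sub>m \<theta>) (b - kd \<cdot>\<^sub>m \<theta>)
               in loewner_le (2 * n) (P * A + A\<^sup>T * P) ((- \<beta>) \<cdot>\<^sub>m 1\<^sub>m (2 * n)))))"
proof -
  note pos = assms(1-5)
  have h1: "bl*kp^2 > (L1+L2)*(kp+kd)" using assms(6) assms(3) by (simp add: field_simps)
  have h2: "bl*kd^2 > kp + (L1+L2)*(kp+kd)" using assms(7) assms(3) by (simp add: field_simps)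
  have ex: "(L1+L2)*(kp+kd) = kp*L1 + kd*L1 + kp*L2 + kd*L2" by (simp add: algebra_simps)
  have pp: "kp*L1 > 0" "kd*L1 > 0" "kp*L2 > 0" "kd*L2 > 0" using pos by auto
  define c where "c = min (bl*kp^2 - kp*L1 - (kp*L2+kd*L1)/2) (bl*kd^2 - kp - kd*L2 - (kp*L2+kd*L1)/2)"
  have cpos: "c > 0" unfolding c_def using h1 h2 pp unfolding ex by simp
  have hk: "kp < 2 * kd^2 * bl"
  proof -
    have "kp < bl * kd^2" using h2 pp unfolding ex by linarith
    also have "\<dots> \<le> 2 * kd^2 * bl" using pos by simp
    finally show ?thesis .
  qed
  have PART1: "\<forall>n::nat. n \<ge> 1 \<longrightarrow>
           pos_definite (2 * n)
             (four_block_mat ((2 * kp * kd * bl) \<cdot>\<^sub>m 1\<^sub>m n) (kp \<cdot>\<^sub>m 1\<^sub>m n)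
                             (kp \<cdot>\<^sub>m 1\<^sub>m n) (kd \<cdot>\<^sub>m 1\<^sub>m n))"
  proof (intro allI impI)
    fix n :: nat assume "n \<ge> 1"
    define P where "P = four_block_mat ((2 * kp * kd * bl) \<cdot>\<^sub>m 1\<^sub>m n) (kp \<cdot>\<^sub>m 1\<^sub>m n)
                             (kp \<cdot>\<^sub>m 1\<^sub>m n) (kd \<cdot>\<^sub>m (1\<^sub>m n :: real mat))"
    have Pc: "P \<in> carrier_mat (2*n) (2*n)" unfolding P_def mult_2
      by (rule four_block_carrier_mat) auto
    have PT: "P\<^sup>T = P" unfolding P_def by (rule P_transpose)
    have P0: "P - 0\<^sub>m (2*n) (2*n) = P" using Pc by (intro eq_matI) auto
    have "loewner_less (2*n) (0\<^sub>m (2*n) (2*n)) P"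
      unfolding loewner_less_def P0
    proof (intro conjI ballI impI)
      fix z :: "real vec" assume z: "z \<in> carrier_vec (2*n)" and nz: "z \<noteq> 0\<^sub>v (2*n)"
      define x where "x = vec_first z n"
      define y where "y = vec_last z n"
      have x: "x \<in> carrier_vec n" and y: "y \<in> carrier_vec n" unfolding x_def y_def by auto
      have zxy: "z = x @\<^sub>v y" unfolding x_def y_def using z by (simp add: mult_2)
      have "vnorm z \<noteq> 0" using vnorm_zero[OF z] nz by blast
      then have "z \<bullet> z > 0" using vnorm_sq[of z] self_sp_nonneg[of z] by (simp add: vnorm_def)
      then have nzz: "x \<bullet> x + y \<bullet> y > 0" unfolding zxy using scalar_prod_append[OF x y x y] by simp
      have "z \<bullet> (P *\<^sub>v z) = x \<bullet> (2 * kp * kd * bl \<cdot>\<^sub>v x + kp \<cdot>\<^sub>v y) + y \<bullet> (kp \<cdot>\<^sub>v x + kd \<cdot>\<^sub>v y)"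
        unfolding zxy P_def P_mult[OF x y] using x y by (subst scalar_prod_append[of _ n _ n]) auto
      also have "\<dots> > 0" by (rule part1[OF pos(3,4,5) hk x y nzz])
      finally show "z \<bullet> (P *\<^sub>v z) > 0" .
    qed (use Pc in auto)
    then show "pos_definite (2 * n)
             (four_block_mat ((2 * kp * kd * bl) \<cdot>\<^sub>m 1\<^sub>m n) (kp \<cdot>\<^sub>m 1\<^sub>m n)
                             (kp \<cdot>\<^sub>m 1\<^sub>m n) (kd \<cdot>\<^sub>m 1\<^sub>m n))"
      unfolding pos_definite_def using PT unfolding P_def by simp
  qed
  have PART2: "\<forall>n::nat. \<forall>a b \<theta> :: real mat. n \<ge> 1 \<longrightarrow>
              a \<in> carrier_mat n n \<longrightarrow> b \<in> carrier_mat n n \<longrightarrow> \<theta> \<in> carrier_mat n n \<longrightarrow>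
              op_norm a \<le> L1 \<longrightarrow> op_norm b \<le> L2 \<longrightarrow>
              loewner_le n (bl \<cdot>\<^sub>m 1\<^sub>m n) ((1 / 2) \<cdot>\<^sub>m (\<theta> + \<theta>\<^sup>T)) \<longrightarrow>
              (let P = four_block_mat ((2 * kp * kd * bl) \<cdot>\<^sub>m 1\<^sub>m n) (kp \<cdot>\<^sub>m 1\<^sub>m n)
                                      (kp \<cdot>\<^sub>m 1\<^sub>m n) (kd \<cdot>\<^sub>m 1\<^sub>m n);
                   A = four_block_mat (0\<^sub>m n n) (1\<^sub>m n)
                                      (a - kp \<cdot>\<^sub>m \<theta>) (b - kd \<cdot>\<^sub>m \<theta>)
               in loewner_le (2 * n) (P * A + A\<^sup>T * P) ((- (2*c)) \<cdot>\<^sub>m 1\<^sub>m (2 * n)))"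
  proof (intro allI impI)
    fix n :: nat and a b \<theta> :: "real mat"
    assume a: "a \<in> carrier_mat n n" and b: "b \<in> carrier_mat n n" and t: "\<theta> \<in> carrier_mat n n"
      and na: "op_norm a \<le> L1" and nb: "op_norm b \<le> L2"
      and L: "loewner_le n (bl \<cdot>\<^sub>m 1\<^sub>m n) ((1 / 2) \<cdot>\<^sub>m (\<theta> + \<theta>\<^sup>T))"
    define P where "P = four_block_mat ((2 * kp * kd * bl) \<cdot>\<^sub>m 1\<^sub>m n) (kp \<cdot>\<^sub>m 1\<^sub>m n)
                             (kp \<cdot>\<^sub>m 1\<^sub>m n) (kd \<cdot>\<^sub>m (1\<^sub>m n :: real mat))"
    define A where "A = four_block_mat (0\<^sub>m n n) (1\<^sub>m n) (a - kp \<cdot>\<^sub>m \<theta>) (b - kd \<cdot>\<^sub>m \<theta>)"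
    have Pc: "P \<in> carrier_mat (2*n) (2*n)" unfolding P_def mult_2
      by (rule four_block_carrier_mat) auto
    have Ac: "A \<in> carrier_mat (2*n) (2*n)" unfolding A_def mult_2
      by (rule four_block_carrier_mat) (use a b t in auto)
    have PT: "P\<^sup>T = P" unfolding P_def by (rule P_transpose)
    have "loewner_le (2 * n) (P * A + A\<^sup>T * P) ((- (2*c)) \<cdot>\<^sub>m 1\<^sub>m (2 * n))"
      unfolding loewner_le_def
    proof (intro conjI ballI)
      show "P * A + A\<^sup>T * P \<in> carrier_mat (2 * n) (2 * n)" using Pc Ac by auto
      show "(- (2*c)) \<cdot>\<^sub>m 1\<^sub>m (2 * n) \<in> carrier_mat (2 * n) (2 * n)" by auto
      fix z :: "real vec" assume z: "z \<in> carrier_vec (2*n)"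
      define x where "x = vec_first z n"
      define y where "y = vec_last z n"
      have x: "x \<in> carrier_vec n" and y: "y \<in> carrier_vec n" unfolding x_def y_def by auto
      have zxy: "z = x @\<^sub>v y" unfolding x_def y_def using z by (simp add: mult_2)
      have Pz: "P *\<^sub>v z \<in> carrier_vec (2*n)" "A *\<^sub>v z \<in> carrier_vec (2*n)" using Pc Ac z by auto
      have "((- (2*c)) \<cdot>\<^sub>m 1\<^sub>m (2 * n) - (P * A + A\<^sup>T * P)) *\<^sub>v z
          = (- (2*c)) \<cdot>\<^sub>v z - (P *\<^sub>v (A *\<^sub>v z) + A\<^sup>T *\<^sub>v (P *\<^sub>v z))"
        using Pc Ac z
        by (simp add: minus_mult_distrib_mat_vec[of _ "2*n" "2*n"] add_mult_distrib_mat_vec[of _ "2*n" "2*n"]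
            smult_mat_vec[of "1\<^sub>m (2*n)" "2*n" "2*n"])
      then have "z \<bullet> (((- (2*c)) \<cdot>\<^sub>m 1\<^sub>m (2 * n) - (P * A + A\<^sup>T * P)) *\<^sub>v z)
          = (- (2*c)) * (z \<bullet> z) - (z \<bullet> (P *\<^sub>v (A *\<^sub>v z)) + z \<bullet> (A\<^sup>T *\<^sub>v (P *\<^sub>v z)))"
        using Pc Ac z by (simp add: scalar_prod_minus_distrib[of _ "2*n"] scalar_prod_add_distrib[of _ "2*n"])
      also have "z \<bullet> (P *\<^sub>v (A *\<^sub>v z)) = (P *\<^sub>v z) \<bullet> (A *\<^sub>v z)"
        by (rule sym_form[OF Pc PT z Pz(2)])
      also have "z \<bullet> (A\<^sup>T *\<^sub>v (P *\<^sub>v z)) = (P *\<^sub>v z) \<bullet> (A *\<^sub>v z)"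
        using comm_scalar_prod[of z "2*n" "A\<^sup>T *\<^sub>v (P *\<^sub>v z)"] transpose_vec_mult_scalar[OF Ac z Pz(1)] Ac z Pz
        by (metis transpose_carrier_mat mult_mat_vec_carrier)
      also have "(P *\<^sub>v z) \<bullet> (A *\<^sub>v z) = (2 * kp * kd * bl \<cdot>\<^sub>v x + kp \<cdot>\<^sub>v y) \<bullet> y
          + (kp \<cdot>\<^sub>v x + kd \<cdot>\<^sub>v y) \<bullet> (a *\<^sub>v x + b *\<^sub>v y - \<theta> *\<^sub>v (kp \<cdot>\<^sub>v x + kd \<cdot>\<^sub>v y))"
        unfolding zxy P_def A_def P_mult[OF x y] A_mult[OF x y a b t] using x y a b t
        by (subst scalar_prod_append[of _ n _ n]) auto
      also have "z \<bullet> z = x \<bullet> x + y \<bullet> y" unfolding zxy using scalar_prod_append[OF x y x y] by simp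
      finally have eq: "z \<bullet> (((- (2*c)) \<cdot>\<^sub>m 1\<^sub>m (2 * n) - (P * A + A\<^sup>T * P)) *\<^sub>v z)
         = - (2 * c) * (x \<bullet> x + y \<bullet> y) - 2 * ((2 * kp * kd * bl \<cdot>\<^sub>v x + kp \<cdot>\<^sub>v y) \<bullet> y
          + (kp \<cdot>\<^sub>v x + kd \<cdot>\<^sub>v y) \<bullet> (a *\<^sub>v x + b *\<^sub>v y - \<theta> *\<^sub>v (kp \<cdot>\<^sub>v x + kd \<cdot>\<^sub>v y)))"
        by simp
      have "(2 * kp * kd * bl \<cdot>\<^sub>v x + kp \<cdot>\<^sub>v y) \<bullet> y
          + (kp \<cdot>\<^sub>v x + kd \<cdot>\<^sub>v y) \<bullet> (a *\<^sub>v x + b *\<^sub>v y - \<theta> *\<^sub>v (kp \<cdot>\<^sub>v x + kd \<cdot>\<^sub>v y))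
          \<le> - c * (x \<bullet> x + y \<bullet> y)"
        by (rule part2[OF pos c_def a b t na nb L x y])
      then show "0 \<le> z \<bullet> (((- (2*c)) \<cdot>\<^sub>m 1\<^sub>m (2 * n) - (P * A + A\<^sup>T * P)) *\<^sub>v z)"
        unfolding eq by (rule aux_lin)
    qed
    then show "let P = four_block_mat ((2 * kp * kd * bl) \<cdot>\<^sub>m 1\<^sub>m n) (kp \<cdot>\<^sub>m 1\<^sub>m n)
                                      (kp \<cdot>\<^sub>m 1\<^sub>m n) (kd \<cdot>\<^sub>m 1\<^sub>m n);
                   A = four_block_mat (0\<^sub>m n n) (1\<^sub>m n)
                                      (a - kp \<cdot>\<^sub>m \<theta>) (b - kd \<cdot>\<^sub>m \<theta>)
               in loewner_le (2 * n) (P * A + A\<^sup>T * P) ((- (2*c)) \<cdot>\<^sub>m 1\<^sub>m (2 * n))"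
      unfolding Let_def P_def A_def by simp
  qed
  show ?thesis
    using PART1 PART2 cpos by (intro conjI exI[of _ "2*c"]) auto
qed


end
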